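(* Let $S$ be a compact semigroupoid with open multiplication, and let $T$ be a subsemigroupoid of $S$ that is factorial and dense in $S$. Then $S$ is equidivisible if and only if $T$ is equidivisible.
   Context: A semigroupoid is a graph (vertices, edges, source/range maps $\alpha,\omega$) with associative partial multiplication defined exactly on $D(S)=\{(s,t):\alpha(s)=\omega(t)\}$; $S^I$ adjoins a local identity at each vertex. A compact semigroupoid carries a compact Hausdorff topology in which vertices and edges form closed sets and $\alpha,\omega$ and multiplication are continuous; multiplication is open if $D(S)\to E(S)$ maps open sets to open sets. $T$ is factorial in $S$ if $st\in T$ implies $s,t\in T$. $S$ is equidivisible if whenever $uv=xy$ there is $t\in E(S^I)$ with ($ut=x$ and $v=ty$) or ($xt=u$ and $y=tv$) (for $T$, with $t\in E(T^I)$). *)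

theory Defs
  imports "HOL-Analysis.Analysis"
begin

text \<open>A semigroupoid is represented on a single carrier type 'a: a vertex set V, an edge set E
  (disjoint), source map al (alpha), range map om (omega), and a multiplication m, which is only
  meaningful on D(S) = {(s,t). al s = om t}.\<close>

definition Dom :: "'a set \<Rightarrow> ('a \<Rightarrow> 'a) \<Rightarrow> ('a \<Rightarrow> 'a) \<Rightarrow> ('a \<times> 'a) set" where
  "Dom E al om = {(s,t). s \<in> E \<and> t \<in> E \<and> al s = om t}"

definition semigroupoid ::
  "'a set \<Rightarrow> 'a set \<Rightarrow> ('a \<Rightarrow> 'a) \<Rightarrow> ('a \<Rightarrow> 'a) \<Rightarrow> ('a \<Rightarrow> 'a \<Rightarrow> 'a) \<Rightarrow> bool" where
  "semigroupoid V E al om m \<longleftrightarrow>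
     V \<inter> E = {} \<and>
     (\<forall>e\<in>E. al e \<in> V \<and> om e \<in> V) \<and>
     (\<forall>s\<in>E. \<forall>t\<in>E. al s = om t \<longrightarrow>
         m s t \<in> E \<and> al (m s t) = al t \<and> om (m s t) = om s) \<and>
     (\<forall>r\<in>E. \<forall>s\<in>E. \<forall>t\<in>E. al r = om s \<longrightarrow> al s = om t \<longrightarrow>
         m (m r s) t = m r (m s t))"

definition compact_semigroupoid ::
  "'a topology \<Rightarrow> 'a set \<Rightarrow> 'a set \<Rightarrow> ('a \<Rightarrow> 'a) \<Rightarrow> ('a \<Rightarrow> 'a) \<Rightarrow> ('a \<Rightarrow> 'a \<Rightarrow> 'a) \<Rightarrow> bool" where
  "compact_semigroupoid X V E al om m \<longleftrightarrow>
     semigroupoid V E al om m \<and>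
     topspace X = V \<union> E \<and> compact_space X \<and> Hausdorff_space X \<and>
     closedin X V \<and> closedin X E \<and>
     continuous_map (subtopology X E) (subtopology X V) al \<and>
     continuous_map (subtopology X E) (subtopology X V) om \<and>
     continuous_map (subtopology (prod_topology X X) (Dom E al om)) (subtopology X E)
       (\<lambda>(s,t). m s t)"

definition open_multiplication ::
  "'a topology \<Rightarrow> 'a set \<Rightarrow> ('a \<Rightarrow> 'a) \<Rightarrow> ('a \<Rightarrow> 'a) \<Rightarrow> ('a \<Rightarrow> 'a \<Rightarrow> 'a) \<Rightarrow> bool" where
  "open_multiplication X E al om m \<longleftrightarrow>
     open_map (subtopology (prod_topology X X) (Dom E al om)) (subtopology X E) (\<lambda>(s,t). m s t)"

definition subsemigroupoid ::
  "'a set \<Rightarrow> 'a set \<Rightarrow> 'a set \<Rightarrow> 'a set \<Rightarrow> ('a \<Rightarrow> 'a) \<Rightarrow> ('a \<Rightarrow> 'a) \<Rightarrow> ('a \<Rightarrow> 'a \<Rightarrow> 'a) \<Rightarrow> bool" where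
  "subsemigroupoid VT ET V E al om m \<longleftrightarrow>
     VT \<subseteq> V \<and> ET \<subseteq> E \<and>
     (\<forall>e\<in>ET. al e \<in> VT \<and> om e \<in> VT) \<and>
     (\<forall>s\<in>ET. \<forall>t\<in>ET. al s = om t \<longrightarrow> m s t \<in> ET)"

definition factorial :: "'a set \<Rightarrow> 'a set \<Rightarrow> ('a \<Rightarrow> 'a) \<Rightarrow> ('a \<Rightarrow> 'a) \<Rightarrow> ('a \<Rightarrow> 'a \<Rightarrow> 'a) \<Rightarrow> bool" where
  "factorial ET E al om m \<longleftrightarrow>
     (\<forall>s\<in>E. \<forall>t\<in>E. al s = om t \<longrightarrow> m s t \<in> ET \<longrightarrow> s \<in> ET \<and> t \<in> ET)"

text \<open>The unitization S^I: its edges are Inl e (e an edge) and Inr p (the local identity at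
  vertex p).\<close>
definition edgesI :: "'a set \<Rightarrow> 'a set \<Rightarrow> ('a + 'a) set" where
  "edgesI V E = Inl ` E \<union> Inr ` V"

fun alI :: "('a \<Rightarrow> 'a) \<Rightarrow> 'a + 'a \<Rightarrow> 'a" where
  "alI al (Inl e) = al e"
| "alI al (Inr p) = p"

fun omI :: "('a \<Rightarrow> 'a) \<Rightarrow> 'a + 'a \<Rightarrow> 'a" where
  "omI om (Inl e) = om e"
| "omI om (Inr p) = p"

fun mI :: "('a \<Rightarrow> 'a \<Rightarrow> 'a) \<Rightarrow> 'a + 'a \<Rightarrow> 'a + 'a \<Rightarrow> 'a + 'a" where
  "mI m (Inl a) (Inl b) = Inl (m a b)"
| "mI m (Inl a) (Inr p) = Inl a"
| "mI m (Inr p) b = b"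

definition equidivisible ::
  "'a set \<Rightarrow> 'a set \<Rightarrow> ('a \<Rightarrow> 'a) \<Rightarrow> ('a \<Rightarrow> 'a) \<Rightarrow> ('a \<Rightarrow> 'a \<Rightarrow> 'a) \<Rightarrow> bool" where
  "equidivisible V E al om m \<longleftrightarrow>
     (\<forall>u\<in>E. \<forall>v\<in>E. \<forall>x\<in>E. \<forall>y\<in>E.
        al u = om v \<longrightarrow> al x = om y \<longrightarrow> m u v = m x y \<longrightarrow>
        (\<exists>t\<in>edgesI V E.
           (al u = omI om t \<and> mI m (Inl u) t = Inl x \<and>
            alI al t = om y \<and> Inl v = mI m t (Inl y)) \<or>
           (al x = omI om t \<and> mI m (Inl x) t = Inl u \<and>
            alI al t = om v \<and> Inl y = mI m t (Inl v))))"

end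

theory Submission
  imports Defs
begin
lemma cm_fst: "continuous_map Z (prod_topology A B) f \<Longrightarrow> continuous_map Z A (\<lambda>p. fst (f p))"
  using continuous_map_compose[OF _ continuous_map_fst] by (simp add: o_def)
lemma cm_snd: "continuous_map Z (prod_topology A B) f \<Longrightarrow> continuous_map Z B (\<lambda>p. snd (f p))"
  using continuous_map_compose[OF _ continuous_map_snd] by (simp add: o_def)
lemma cm_id: "continuous_map Z Z (\<lambda>p. p)"
  using continuous_map_id by (simp add: id_def)
lemma prod_open_box:
  assumes "openin (prod_topology X Y) S" "(x,y) \<in> S"
  obtains U V where "openin X U" "openin Y V" "x \<in> U" "y \<in> V" "U \<times> V \<subseteq> S"
proof -
  have "\<forall>x y. (x,y) \<in> S \<longrightarrow> (\<exists>U V. openin X U \<and> openin Y V \<and> x \<in> U \<and> y \<in> V \<and> U \<times> V \<subseteq> S)"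
    using assms(1) by (simp only: openin_prod_topology_alt)
  then show ?thesis using assms(2) that by blast
qed

lemmas cm_rules = cm_fst cm_snd cm_id continuous_map_from_subtopology continuous_map_pairedI

lemma W1_closed:
  assumes cs: "compact_semigroupoid X V E al om m"
  shows "closedin (prod_topology X (prod_topology X (prod_topology X X)))
    {(u,v,x,y). u\<in>E \<and> v\<in>E \<and> x\<in>E \<and> y\<in>E \<and>
       (\<exists>e\<in>E. al u = om e \<and> m u e = x \<and> al e = om y \<and> m e y = v)}"
proof -
  let ?X4 = "prod_topology X (prod_topology X (prod_topology X X))"
  let ?X5 = "prod_topology X ?X4"
  have sg: "semigroupoid V E al om m" and top: "topspace X = V \<union> E" and cp: "compact_space X"
    and hd: "Hausdorff_space X" and cV: "closedin X V" and cE: "closedin X E"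
    and cal: "continuous_map (subtopology X E) (subtopology X V) al"
    and com: "continuous_map (subtopology X E) (subtopology X V) om"
    and cm: "continuous_map (subtopology (prod_topology X X) (Dom E al om)) (subtopology X E) (\<lambda>(s,t). m s t)"
    using cs unfolding compact_semigroupoid_def by auto
  have calX: "continuous_map (subtopology X E) X al"
    using cal continuous_map_in_subtopology by blast
  have comX: "continuous_map (subtopology X E) X om"
    using com continuous_map_in_subtopology by blast
  have cmX: "continuous_map (subtopology (prod_topology X X) (Dom E al om)) X (\<lambda>(s,t). m s t)"
    using cm continuous_map_in_subtopology by blast
  define B5 where "B5 = E \<times> (E \<times> (E \<times> (E \<times> E)))"
  have cB5: "closedin ?X5 B5" unfolding B5_def
    using cE by (simp add: closedin_prod_Times_iff)
  define P where "P = subtopology ?X5 B5"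
  have tP: "topspace P = B5"
    unfolding P_def B5_def using top closedin_subset[OF cE] by auto
  have proj: "continuous_map P (subtopology X E) g"
    if "continuous_map ?X5 X g" "\<And>p. p \<in> B5 \<Longrightarrow> g p \<in> E" for g
    using that unfolding continuous_map_in_subtopology P_def
    by (auto simp: continuous_map_from_subtopology)
  have pe: "continuous_map P (subtopology X E) (\<lambda>p. fst p)"
    by (rule proj) (rule cm_rules | auto simp: B5_def)+
  have pu: "continuous_map P (subtopology X E) (\<lambda>p. fst (snd p))"
    by (rule proj) (rule cm_rules | auto simp: B5_def)+
  have pv: "continuous_map P (subtopology X E) (\<lambda>p. fst (snd (snd p)))"
    by (rule proj) (rule cm_rules | auto simp: B5_def)+
  have px: "continuous_map P (subtopology X E) (\<lambda>p. fst (snd (snd (snd p))))"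
    by (rule proj) (rule cm_rules | auto simp: B5_def)+
  have py: "continuous_map P (subtopology X E) (\<lambda>p. snd (snd (snd (snd p))))"
    by (rule proj) (rule cm_rules | auto simp: B5_def)+
  define Z1 where "Z1 = {p \<in> topspace P. al (fst (snd p)) = om (fst p)} \<inter>
     {p \<in> topspace P. al (fst p) = om (snd (snd (snd (snd p))))}"
  have "closedin P Z1" unfolding Z1_def
    apply (intro closedin_Int closedin_continuous_maps_eq[OF hd])
    using continuous_map_compose[OF pu calX] continuous_map_compose[OF pe comX]
      continuous_map_compose[OF pe calX] continuous_map_compose[OF py comX]
    by (auto simp: o_def)
  then have cZ1: "closedin ?X5 Z1"
    using closedin_trans_full cB5 P_def by blast
  define P1 where "P1 = subtopology ?X5 Z1"
  have Z1B: "Z1 \<subseteq> B5" unfolding Z1_def tP by auto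
  have P1P: "P1 = subtopology P Z1"
    unfolding P1_def P_def subtopology_subtopology using Z1B by (simp add: Int_absorb1)
  have m1: "continuous_map P1 X (\<lambda>p. m (fst (snd p)) (fst p))"
  proof -
    have "continuous_map P1 (subtopology (prod_topology X X) (Dom E al om)) (\<lambda>p. (fst (snd p), fst p))"
      unfolding continuous_map_in_subtopology
    proof
      show "continuous_map P1 (prod_topology X X) (\<lambda>p. (fst (snd p), fst p))"
        unfolding P1P using pu pe
        by (intro continuous_map_pairedI continuous_map_from_subtopology)
          (auto simp: continuous_map_in_subtopology)
      show "(\<lambda>p. (fst (snd p), fst p)) \<in> topspace P1 \<rightarrow> Dom E al om"
        unfolding P1P using Z1B tP by (auto simp: Dom_def Z1_def B5_def)
    qed
    from continuous_map_compose[OF this cmX] show ?thesis by (simp add: o_def)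
  qed
  have m2: "continuous_map P1 X (\<lambda>p. m (fst p) (snd (snd (snd (snd p)))))"
  proof -
    have "continuous_map P1 (subtopology (prod_topology X X) (Dom E al om)) (\<lambda>p. (fst p, snd (snd (snd (snd p)))))"
      unfolding continuous_map_in_subtopology
    proof
      show "continuous_map P1 (prod_topology X X) (\<lambda>p. (fst p, snd (snd (snd (snd p)))))"
        unfolding P1P using py pe
        by (intro continuous_map_pairedI continuous_map_from_subtopology)
          (auto simp: continuous_map_in_subtopology)
      show "(\<lambda>p. (fst p, snd (snd (snd (snd p))))) \<in> topspace P1 \<rightarrow> Dom E al om"
        unfolding P1P using Z1B tP by (auto simp: Dom_def Z1_def B5_def)
    qed
    from continuous_map_compose[OF this cmX] show ?thesis by (simp add: o_def)
  qed
  have pv1: "continuous_map P1 X (\<lambda>p. fst (snd (snd p)))"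
    unfolding P1P using pv by (auto simp: continuous_map_in_subtopology continuous_map_from_subtopology)
  have px1: "continuous_map P1 X (\<lambda>p. fst (snd (snd (snd p))))"
    unfolding P1P using px by (auto simp: continuous_map_in_subtopology continuous_map_from_subtopology)
  define Z where "Z = {p \<in> topspace P1. m (fst (snd p)) (fst p) = fst (snd (snd (snd p)))} \<inter>
     {p \<in> topspace P1. m (fst p) (snd (snd (snd (snd p)))) = fst (snd (snd p))}"
  have "closedin P1 Z" unfolding Z_def
    by (intro closedin_Int closedin_continuous_maps_eq[OF hd] m1 m2 pv1 px1)
  then have cZ: "closedin ?X5 Z"
    using closedin_trans_full cZ1 P1_def by blast
  have "closedin ?X4 (snd ` Z)"
    using closed_map_snd[OF cp] cZ unfolding closed_map_def by blast
  moreover have "snd ` Z = {(u,v,x,y). u\<in>E \<and> v\<in>E \<and> x\<in>E \<and> y\<in>E \<and>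
       (\<exists>e\<in>E. al u = om e \<and> m u e = x \<and> al e = om y \<and> m e y = v)}"
  proof -
    have tP1: "topspace P1 = Z1" unfolding P1P using Z1B tP by auto
    show ?thesis
    proof (intro equalityI subsetI)
      fix q assume "q \<in> snd ` Z"
      then obtain p where p: "p \<in> Z" "q = snd p" by blast
      obtain e u v x y where "p = (e,u,v,x,y)" by (cases p) auto
      with p show "q \<in> {(u,v,x,y). u\<in>E \<and> v\<in>E \<and> x\<in>E \<and> y\<in>E \<and>
       (\<exists>e\<in>E. al u = om e \<and> m u e = x \<and> al e = om y \<and> m e y = v)}"
        unfolding Z_def tP1 Z1_def tP B5_def by auto
    next
      fix q assume "q \<in> {(u,v,x,y). u\<in>E \<and> v\<in>E \<and> x\<in>E \<and> y\<in>E \<and>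
       (\<exists>e\<in>E. al u = om e \<and> m u e = x \<and> al e = om y \<and> m e y = v)}"
      then obtain u v x y e where q: "q = (u,v,x,y)" "u\<in>E" "v\<in>E" "x\<in>E" "y\<in>E" "e\<in>E"
        "al u = om e" "m u e = x" "al e = om y" "m e y = v" by auto
      then have "(e,u,v,x,y) \<in> Z" unfolding Z_def tP1 Z1_def tP B5_def by auto
      then show "q \<in> snd ` Z" using q(1) by (metis image_eqI snd_conv)
    qed
  qed
  ultimately show ?thesis by simp
qed

lemma S_to_T:
  assumes sub: "subsemigroupoid VT ET V E al om m" and fac: "factorial ET E al om m"
    and eq: "equidivisible V E al om m"
  shows "equidivisible VT ET al om m"
  unfolding equidivisible_def
proof (intro ballI impI)
  fix u v x y assume uT: "u \<in> ET" "v \<in> ET" "x \<in> ET" "y \<in> ET"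
    and d: "al u = om v" "al x = om y" and muv: "m u v = m x y"
  have ET: "ET \<subseteq> E" and VT: "\<forall>e\<in>ET. al e \<in> VT \<and> om e \<in> VT" using sub by (auto simp: subsemigroupoid_def)
  from eq uT ET d muv obtain t where t: "t \<in> edgesI V E" and
    c: "(al u = omI om t \<and> mI m (Inl u) t = Inl x \<and> alI al t = om y \<and> Inl v = mI m t (Inl y)) \<or>
           (al x = omI om t \<and> mI m (Inl x) t = Inl u \<and> alI al t = om v \<and> Inl y = mI m t (Inl v))"
    unfolding equidivisible_def by blast
  show "\<exists>t\<in>edgesI VT ET.
           (al u = omI om t \<and> mI m (Inl u) t = Inl x \<and> alI al t = om y \<and> Inl v = mI m t (Inl y)) \<or>
           (al x = omI om t \<and> mI m (Inl x) t = Inl u \<and> alI al t = om v \<and> Inl y = mI m t (Inl v))"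
  proof (cases t)
    case (Inl e)
    with t have eE: "e \<in> E" by (auto simp: edgesI_def)
    from c Inl have "e \<in> ET"
    proof (elim disjE)
      assume "al u = omI om t \<and> mI m (Inl u) t = Inl x \<and> alI al t = om y \<and> Inl v = mI m t (Inl y)"
      then show "e \<in> ET" using Inl fac eE uT ET unfolding factorial_def by auto
    next
      assume "al x = omI om t \<and> mI m (Inl x) t = Inl u \<and> alI al t = om v \<and> Inl y = mI m t (Inl v)"
      then show "e \<in> ET" using Inl fac eE uT ET unfolding factorial_def by auto
    qed
    then have "t \<in> edgesI VT ET" using Inl by (auto simp: edgesI_def)
    with c show ?thesis by blast
  next
    case (Inr p)
    from c Inr have "p = al u \<or> p = al x" by auto
    then have "p \<in> VT" using VT uT by auto
    then have "t \<in> edgesI VT ET" using Inr by (auto simp: edgesI_def)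
    with c show ?thesis by blast
  qed
qed


lemma T_to_S:
  assumes cs: "compact_semigroupoid X V E al om m"
    and om_: "open_multiplication X E al om m"
    and sub: "subsemigroupoid VT ET V E al om m"
    and fac: "factorial ET E al om m"
    and dense: "X closure_of (VT \<union> ET) = topspace X"
    and eqT: "equidivisible VT ET al om m"
  shows "equidivisible V E al om m"
  unfolding equidivisible_def
proof (intro ballI impI)
  fix u v x y assume uE: "u \<in> E" "v \<in> E" "x \<in> E" "y \<in> E"
    and d: "al u = om v" "al x = om y" and muv: "m u v = m x y"
  let ?X4 = "prod_topology X (prod_topology X (prod_topology X X))"
  have sg: "semigroupoid V E al om m" and top: "topspace X = V \<union> E"
    and hd: "Hausdorff_space X" and cV: "closedin X V" and cE: "closedin X E"
    using cs unfolding compact_semigroupoid_def by auto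
  have VE: "V \<inter> E = {}" and mE: "\<And>s t. s \<in> E \<Longrightarrow> t \<in> E \<Longrightarrow> al s = om t \<Longrightarrow> m s t \<in> E"
    and alV: "\<And>e. e \<in> E \<Longrightarrow> al e \<in> V"
    using sg unfolding semigroupoid_def by auto
  have ET: "ET \<subseteq> E" and VT: "VT \<subseteq> V" using sub by (auto simp: subsemigroupoid_def)
  have oE: "openin X E"
  proof -
    have "topspace X - V = E" using top VE by auto
    then show ?thesis using cV unfolding closedin_def by simp
  qed
  define W1 where "W1 = {(u,v,x,y). u\<in>E \<and> v\<in>E \<and> x\<in>E \<and> y\<in>E \<and>
       (\<exists>e\<in>E. al u = om e \<and> m u e = x \<and> al e = om y \<and> m e y = v)}"
  have cW1: "closedin ?X4 W1" unfolding W1_def by (rule W1_closed[OF cs])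
  define sw where "sw = (\<lambda>q::'a\<times>'a\<times>'a\<times>'a. (fst(snd(snd q)), snd(snd(snd q)), fst q, fst (snd q)))"
  have csw: "continuous_map ?X4 ?X4 sw" unfolding sw_def by (rule cm_rules)+
  define W2 where "W2 = {q \<in> topspace ?X4. sw q \<in> W1}"
  have cW2: "closedin ?X4 W2" unfolding W2_def by (rule closedin_continuous_map_preimage[OF csw cW1])
  define I where "I = {q \<in> topspace ?X4. fst q = fst(snd(snd q))} \<inter> {q \<in> topspace ?X4. fst (snd q) = snd(snd(snd q))}"
  have cI: "closedin ?X4 I" unfolding I_def
  proof (rule closedin_Int)
    have c1: "continuous_map ?X4 X (\<lambda>q. fst q)" by (rule cm_fst, rule cm_id)
    have c2: "continuous_map ?X4 X (\<lambda>q. fst (snd (snd q)))" by (rule cm_fst, rule cm_snd, rule cm_snd, rule cm_id)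
    have c3: "continuous_map ?X4 X (\<lambda>q. fst (snd q))" by (rule cm_fst, rule cm_snd, rule cm_id)
    have c4: "continuous_map ?X4 X (\<lambda>q. snd (snd (snd q)))" by (rule cm_snd, rule cm_snd, rule cm_snd, rule cm_id)
    show "closedin ?X4 {q \<in> topspace ?X4. fst q = fst(snd(snd q))}"
      by (rule closedin_continuous_maps_eq[OF hd c1 c2])
    show "closedin ?X4 {q \<in> topspace ?X4. fst (snd q) = snd(snd(snd q))}"
      by (rule closedin_continuous_maps_eq[OF hd c3 c4])
  qed
  define G where "G = W1 \<union> W2 \<union> I"
  have cG: "closedin ?X4 G" unfolding G_def using cW1 cW2 cI by (intro closedin_Un)
  define T4 where "T4 = {(u,v,x,y). u\<in>ET \<and> v\<in>ET \<and> x\<in>ET \<and> y\<in>ET \<and> al u = om v \<and> al x = om y \<and> m u v = m x y}"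
  have T4G: "T4 \<subseteq> G"
  proof
    fix q assume "q \<in> T4"
    then obtain u v x y where q: "q = (u,v,x,y)" "u\<in>ET" "v\<in>ET" "x\<in>ET" "y\<in>ET"
      "al u = om v" "al x = om y" "m u v = m x y" unfolding T4_def by auto
    then obtain t where t: "t \<in> edgesI VT ET" and
      c: "(al u = omI om t \<and> mI m (Inl u) t = Inl x \<and> alI al t = om y \<and> Inl v = mI m t (Inl y)) \<or>
           (al x = omI om t \<and> mI m (Inl x) t = Inl u \<and> alI al t = om v \<and> Inl y = mI m t (Inl v))"
      using eqT unfolding equidivisible_def by blast
    have qE: "u \<in> E" "v \<in> E" "x \<in> E" "y \<in> E" using q ET by auto
    have qtop: "q \<in> topspace ?X4" using q qE top by auto
    show "q \<in> G"
    proof (cases t)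
      case (Inl e)
      with t ET have eE: "e \<in> E" by (auto simp: edgesI_def)
      from c show ?thesis
      proof (elim disjE)
        assume "al u = omI om t \<and> mI m (Inl u) t = Inl x \<and> alI al t = om y \<and> Inl v = mI m t (Inl y)"
        then have "q \<in> W1" using Inl eE qE q(1) unfolding W1_def by auto
        then show ?thesis unfolding G_def by auto
      next
        assume "al x = omI om t \<and> mI m (Inl x) t = Inl u \<and> alI al t = om v \<and> Inl y = mI m t (Inl v)"
        then have "sw q \<in> W1" using Inl eE qE q(1) unfolding W1_def sw_def by auto
        then show ?thesis using qtop unfolding G_def W2_def by auto
      qed
    next
      case (Inr p)
      with c have "u = x \<and> v = y" by auto
      then have "q \<in> I" using qtop q(1) unfolding I_def by auto
      then show ?thesis unfolding G_def by auto
    qed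
  qed
  have inclos: "(u,v,x,y) \<in> ?X4 closure_of T4"
    unfolding in_closure_of
  proof (intro conjI allI impI)
    show "(u,v,x,y) \<in> topspace ?X4" using uE top by auto
    fix N assume "(u,v,x,y) \<in> N \<and> openin ?X4 N"
    then have uO: "(u,v,x,y) \<in> N" and oO: "openin ?X4 N" by auto
    obtain U1 O2 where o1: "openin X U1" "openin (prod_topology X (prod_topology X X)) O2" "u \<in> U1" "(v,x,y) \<in> O2" "U1 \<times> O2 \<subseteq> N"
      by (rule prod_open_box[OF oO uO])
    obtain U2 O3 where o2: "openin X U2" "openin (prod_topology X X) O3" "v \<in> U2" "(x,y) \<in> O3" "U2 \<times> O3 \<subseteq> O2"
      by (rule prod_open_box[OF o1(2,4)])
    obtain U3 U4 where o3: "openin X U3" "openin X U4" "x \<in> U3" "y \<in> U4" "U3 \<times> U4 \<subseteq> O3"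
      by (rule prod_open_box[OF o2(2,4)])
    have box: "U1 \<times> U2 \<times> U3 \<times> U4 \<subseteq> N"
    proof -
      have "U2 \<times> U3 \<times> U4 \<subseteq> O2" using o2(5) o3(5) by fast
      then show ?thesis using o1(5) by fast
    qed
    have om': "openin (subtopology X E) ((\<lambda>(s,t). m s t) ` W)"
      if "openin (subtopology (prod_topology X X) (Dom E al om)) W" for W
      using om_ that unfolding open_multiplication_def open_map_def by blast
    define A where "A = (\<lambda>(s,t). m s t) ` ((U1 \<times> U2) \<inter> Dom E al om)"
    define B where "B = (\<lambda>(s,t). m s t) ` ((U3 \<times> U4) \<inter> Dom E al om)"
    have oA: "openin X A"
      unfolding A_def
      by (rule openin_trans_full[OF om' oE], rule openin_subtopology_Int, simp add: openin_prod_Times_iff o1(1) o2(1))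
    have oB: "openin X B"
      unfolding B_def
      by (rule openin_trans_full[OF om' oE], rule openin_subtopology_Int, simp add: openin_prod_Times_iff o3(1) o3(2))
    have zA: "m u v \<in> A" unfolding A_def using o1(3) o2(3) uE d
      by (intro image_eqI[where x="(u,v)"]) (auto simp: Dom_def)
    have zB: "m u v \<in> B" unfolding B_def using o3(3,4) uE d muv
      by (intro image_eqI[where x="(x,y)"]) (auto simp: Dom_def)
    have "m u v \<in> topspace X" using mE uE d top by auto
    then have "m u v \<in> X closure_of (VT \<union> ET)" using dense by simp
    moreover have "m u v \<in> A \<inter> B \<and> openin X (A \<inter> B)" using zA zB oA oB by (simp add: openin_Int)
    ultimately obtain w where w: "w \<in> VT \<union> ET" "w \<in> A \<inter> B"
      unfolding in_closure_of by blast
    have AE: "A \<subseteq> E" unfolding A_def Dom_def using mE by auto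
    have wET: "w \<in> ET" using w AE VT VE by auto
    have "w \<in> A" using w(2) by blast
    then obtain p where p: "p \<in> (U1 \<times> U2) \<inter> Dom E al om" "w = (\<lambda>(s,t). m s t) p"
      unfolding A_def by (rule imageE)
    obtain u' v' where pp: "p = (u',v')" by (cases p)
    have 1: "u' \<in> U1" "v' \<in> U2" "(u',v') \<in> Dom E al om" "w = m u' v'"
      using p unfolding pp by auto
    have "w \<in> B" using w(2) by blast
    then obtain q where q: "q \<in> (U3 \<times> U4) \<inter> Dom E al om" "w = (\<lambda>(s,t). m s t) q"
      unfolding B_def by (rule imageE)
    obtain x' y' where qq: "q = (x',y')" by (cases q)
    have 2: "x' \<in> U3" "y' \<in> U4" "(x',y') \<in> Dom E al om" "w = m x' y'"
      using q unfolding qq by auto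
    have f: "\<And>s t. s\<in>E \<Longrightarrow> t\<in>E \<Longrightarrow> al s = om t \<Longrightarrow> m s t \<in> ET \<Longrightarrow> s \<in> ET \<and> t \<in> ET"
      using fac unfolding factorial_def by blast
    have d1: "u' \<in> E" "v' \<in> E" "al u' = om v'" using 1(3) by (auto simp: Dom_def)
    have d2: "x' \<in> E" "y' \<in> E" "al x' = om y'" using 2(3) by (auto simp: Dom_def)
    have "u' \<in> ET \<and> v' \<in> ET" using f[OF d1] wET 1(4) by simp
    moreover have "x' \<in> ET \<and> y' \<in> ET" using f[OF d2] wET 2(4) by simp
    moreover have "m u' v' = m x' y'" using 1(4) 2(4) by simp
    ultimately have "(u',v',x',y') \<in> T4"
      using d1(3) d2(3) unfolding T4_def by simp
    moreover have "(u',v',x',y') \<in> N" by (rule subsetD[OF box]) (simp add: 1(1,2) 2(1,2))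
    ultimately show "\<exists>y. y \<in> T4 \<and> y \<in> N" by blast
  qed
  have "(u,v,x,y) \<in> G" using closure_of_minimal[OF T4G cG] inclos by blast
  then consider "(u,v,x,y) \<in> W1" | "(u,v,x,y) \<in> W2" | "(u,v,x,y) \<in> I" unfolding G_def by blast
  then show "\<exists>t\<in>edgesI V E.
           (al u = omI om t \<and> mI m (Inl u) t = Inl x \<and> alI al t = om y \<and> Inl v = mI m t (Inl y)) \<or>
           (al x = omI om t \<and> mI m (Inl x) t = Inl u \<and> alI al t = om v \<and> Inl y = mI m t (Inl v))"
  proof cases
    case 1
    then obtain e where "e \<in> E" "al u = om e" "m u e = x" "al e = om y" "m e y = v"
      unfolding W1_def by auto
    then show ?thesis by (intro bexI[where x="Inl e"]) (auto simp: edgesI_def)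
  next
    case 2
    then obtain e where "e \<in> E" "al x = om e" "m x e = u" "al e = om v" "m e v = y"
      unfolding W2_def W1_def sw_def by auto
    then show ?thesis by (intro bexI[where x="Inl e"]) (auto simp: edgesI_def)
  next
    case 3
    then have "u = x" "v = y" unfolding I_def by auto
    then show ?thesis using alV[OF uE(1)] d
      by (intro bexI[where x="Inr (al u)"]) (auto simp: edgesI_def)
  qed
qed

theorem mainTheorem11:
  fixes X :: "'a topology"
    and V E VT ET :: "'a set"
    and al om :: "'a \<Rightarrow> 'a"
    and m :: "'a \<Rightarrow> 'a \<Rightarrow> 'a"
  assumes "compact_semigroupoid X V E al om m"
    and "open_multiplication X E al om m"
    and "subsemigroupoid VT ET V E al om m"
    and "factorial ET E al om m"
    and "X closure_of (VT \<union> ET) = topspace X"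
  shows "equidivisible V E al om m \<longleftrightarrow> equidivisible VT ET al om m"
  using S_to_T[OF assms(3,4)] T_to_S[OF assms] by blast

end
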